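(* Let $q$ be a prime power and $n\ge 3$ an integer. Then $$B_q(n,3,3;3)\le\left(1+\frac{1}{2\left[{3\atop 2}\right]_q-1}\right)\frac{\left[{n\atop 2}\right]_q}{\left[{3\atop 2}\right]_q}.$$
   Context: For a prime power $q$, $\mathcal{G}_q(n,k)$ denotes the set of all $k$-dimensional subspaces of $\mathbb{F}_q^n$, and the Gaussian binomial coefficient is $\left[{n\atop k}\right]_q=\prod_{i=0}^{k-1}\frac{q^n-q^i}{q^k-q^i}=|\mathcal{G}_q(n,k)|$. An $\alpha$-$(n,k,\delta)_q^c$ covering Grassmannian code is a subset $\mathcal{C}\subseteq\mathcal{G}_q(n,k)$ (no repeated codewords) such that every set of $\alpha$ distinct codewords of $\mathcal{C}$ spans a subspace of $\mathbb{F}_q^n$ of dimension at least $k+\delta$. $B_q(n,k,\delta;\alpha)$ denotes the maximum size of an $\alpha$-$(n,k,\delta)_q^c$ code. *)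

theory Defs
  imports "HOL-Analysis.Analysis"
begin

text \<open>F_q^n is modelled as the type 'a ^ 'n with 'a a finite field (q = CARD('a))
 and n = CARD('n); subspaces and dimensions are those of the library
 vector space interpretation vec (scalar multiplication (*s)).\<close>

definition grassmannian :: "nat \<Rightarrow> ('a::field ^ 'n) set set" where
  "grassmannian k = {U. vec.subspace U \<and> vec.dim U = k}"

definition gauss_binom :: "real \<Rightarrow> nat \<Rightarrow> nat \<Rightarrow> real" where
  "gauss_binom q n k = (\<Prod>i<k. (q ^ n - q ^ i) / (q ^ k - q ^ i))"

definition covering_code :: "('a::field ^ 'n) set set \<Rightarrow> nat \<Rightarrow> nat \<Rightarrow> nat \<Rightarrow> bool" where
  "covering_code C k \<delta> \<alpha> \<longleftrightarrow> C \<subseteq> grassmannian k \<and>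
     (\<forall>S. S \<subseteq> C \<and> card S = \<alpha> \<longrightarrow> vec.dim (vec.span (\<Union>S)) \<ge> k + \<delta>)"

definition Bq :: "('a::field ^ 'n) itself \<Rightarrow> nat \<Rightarrow> nat \<Rightarrow> nat \<Rightarrow> nat" where
  "Bq _ k \<delta> \<alpha> = Sup {card C | C :: ('a ^ 'n) set set. covering_code C k \<delta> \<alpha>}"

end

theory Submission
  imports Defs
begin

lemma card_span_indep:
  fixes B :: "('a::{field,finite}^'n) set"
  shows "vec.independent B \<Longrightarrow> card (vec.span B) = CARD('a) ^ card B"
proof -
  have "finite B" by simp
  then show "vec.independent B \<Longrightarrow> card (vec.span B) = CARD('a) ^ card B"
  proof (induction B rule: finite_induct)
    case empty
    then show ?case by simp
  next
    case (insert x F)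
    have iF: "vec.independent F" and xF: "x \<notin> vec.span F"
      using insert.prems insert.hyps by (simp_all add: vec.independent_insert)
    have eq: "vec.span (insert x F) = (\<lambda>(c,y). y + c *s x) ` (UNIV \<times> vec.span F)"
    proof
      show "vec.span (insert x F) \<subseteq> (\<lambda>(c,y). y + c *s x) ` (UNIV \<times> vec.span F)"
      proof
        fix z assume "z \<in> vec.span (insert x F)"
        then obtain k where "z - k *s x \<in> vec.span F" unfolding vec.span_insert by auto
        then show "z \<in> (\<lambda>(c,y). y + c *s x) ` (UNIV \<times> vec.span F)"
          by (intro image_eqI[of _ _ "(k, z - k *s x)"]) auto
      qed
    next
      show "(\<lambda>(c,y). y + c *s x) ` (UNIV \<times> vec.span F) \<subseteq> vec.span (insert x F)"
      proof clarify
        fix c y assume "y \<in> vec.span F"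
        then have "y \<in> vec.span (insert x F)" using vec.span_mono[of F "insert x F"] by blast
        moreover have "c *s x \<in> vec.span (insert x F)" by (intro vec.span_scale vec.span_base) simp
        ultimately show "y + c *s x \<in> vec.span (insert x F)" by (rule vec.span_add)
      qed
    qed
    have inj: "inj_on (\<lambda>(c,y). y + c *s x) (UNIV \<times> vec.span F)"
    proof (rule inj_onI, clarify)
      fix c y c' y'
      assume y: "y \<in> vec.span F" and y': "y' \<in> vec.span F" and e: "y + c *s x = y' + c' *s x"
      have "(c - c') *s x = y' - y" using e by (simp add: algebra_simps vector_sub_rdistrib)
      also have "\<dots> \<in> vec.span F" using y y' by (simp add: vec.span_diff)
      finally have m: "(c - c') *s x \<in> vec.span F" .
      show "c = c' \<and> y = y'"
      proof (cases "c = c'")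
        case True then show ?thesis using e by simp
      next
        case False
        then have "x = inverse (c - c') *s ((c - c') *s x)" by (simp del: vector_sub_rdistrib)
        also have "\<dots> \<in> vec.span F" using m by (rule vec.span_scale)
        finally show ?thesis using xF by simp
      qed
    qed
    have "card (vec.span (insert x F)) = CARD('a) * card (vec.span F)"
      unfolding eq using card_image[OF inj] by simp
    also have "\<dots> = CARD('a) * CARD('a) ^ card F"
      using insert.IH[OF iF] by simp
    finally show ?case using insert.hyps by simp
  qed
qed

lemma card_subspace:
  fixes S :: "('a::{field,finite}^'n) set"
  assumes "vec.subspace S"
  shows "card S = CARD('a) ^ vec.dim S"
proof -
  obtain B where B: "B \<subseteq> S" "vec.independent B" "S \<subseteq> vec.span B" "card B = vec.dim S"
    by (rule vec.basis_exists)
  have "vec.span B = S" using B assms by (intro vec.span_subspace) auto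
  then show ?thesis using card_span_indep[OF B(2)] B(4) by simp
qed

lemma card_span_single:
  fixes x :: "'a::{field,finite}^'n"
  assumes "x \<noteq> 0"
  shows "card (vec.span {x}) = CARD('a)"
proof -
  have "vec.independent {x}" using assms by (simp add: vec.independent_insert)
  from card_span_indep[OF this] show ?thesis by simp
qed

definition pairs :: "('a::field^'n) set \<Rightarrow> (('a^'n) \<times> ('a^'n)) set" where
  "pairs S = {(x,y). x \<in> S \<and> y \<in> S \<and> x \<noteq> 0 \<and> y \<notin> vec.span {x}}"

lemma card_pairs:
  fixes S :: "('a::{field,finite}^'n) set"
  assumes "vec.subspace S"
  shows "card (pairs S) = (card S - 1) * (card S - CARD('a))"
proof -
  have eq: "pairs S = Sigma (S - {0}) (\<lambda>x. S - vec.span {x})"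
    unfolding pairs_def by auto
  have "card (pairs S) = (\<Sum>x\<in>S - {0}. card (S - vec.span {x}))"
    unfolding eq by (simp add: card_SigmaI)
  also have "\<dots> = (\<Sum>x\<in>S - {0}. card S - CARD('a))"
  proof (rule sum.cong[OF refl])
    fix x assume x: "x \<in> S - {0}"
    have "vec.span {x} \<subseteq> S" using x assms by (intro vec.span_minimal) auto
    then show "card (S - vec.span {x}) = card S - CARD('a)"
      using x by (simp add: card_Diff_subset card_span_single)
  qed
  also have "\<dots> = (card S - 1) * (card S - CARD('a))"
    using assms by (simp add: vec.subspace_0)
  finally show ?thesis .
qed

lemma extend3:
  fixes U :: "('a::{field,finite}^'n) set"
  assumes "vec.subspace U" "vec.dim U = 3" "(x,y) \<in> pairs U"
  obtains u where "U \<subseteq> vec.span {x,y,u}"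
proof -
  have x0: "x \<noteq> 0" and yx: "y \<notin> vec.span {x}" and xU: "x \<in> U" and yU: "y \<in> U"
    using assms(3) by (auto simp: pairs_def)
  have xy: "x \<noteq> y" using yx vec.span_base[of x "{x}"] by auto
  have ind: "vec.independent {y, x}"
    using x0 yx xy by (simp add: vec.independent_insert)
  obtain B where B: "{y,x} \<subseteq> B" "B \<subseteq> U" "vec.independent B" "U \<subseteq> vec.span B"
    using vec.maximal_independent_subset_extend[of "{y,x}" U] ind xU yU by auto
  have cB: "card B = 3" using vec.basis_card_eq_dim[OF B(2) B(4) B(3)] assms(2) by simp
  have "card (B - {y,x}) = 1" using cB B(1) xy by (simp add: card_Diff_subset)
  then obtain u where u: "B - {y,x} = {u}" by (auto simp: card_Suc_eq)
  have "B \<subseteq> {x,y,u}" using u by auto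
  then have "U \<subseteq> vec.span {x,y,u}" using B(4) vec.span_mono by blast
  then show ?thesis by (rule that)
qed

lemma F1:
  fixes C :: "('a::{field,finite}^'n) set set"
  assumes code: "covering_code C 3 3 3"
    and UVW: "U \<in> C" "V \<in> C" "W \<in> C" "U \<noteq> V" "U \<noteq> W" "V \<noteq> W"
    and p: "p \<in> pairs U" "p \<in> pairs V" and p': "p' \<in> pairs U" "p' \<in> pairs W"
  shows False
proof -
  obtain x y where pxy: "p = (x,y)" by (cases p)
  obtain x' y' where pxy': "p' = (x',y')" by (cases p')
  have G: "\<And>Z. Z \<in> C \<Longrightarrow> vec.subspace Z \<and> vec.dim Z = 3"
    using code unfolding covering_code_def grassmannian_def by blast
  obtain u where u: "U \<subseteq> vec.span {x,y,u}" using extend3[of U x y] G[OF UVW(1)] p pxy by blast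
  obtain v where v: "V \<subseteq> vec.span {x,y,v}" using extend3[of V x y] G[OF UVW(2)] p pxy by blast
  obtain w where w: "W \<subseteq> vec.span {x',y',w}" using extend3[of W x' y'] G[OF UVW(3)] p' pxy' by blast
  define T where "T = {x,y,u,v,w}"
  have sub1: "vec.span {x,y,u} \<subseteq> vec.span T" unfolding T_def by (rule vec.span_mono) auto
  have sub2: "vec.span {x,y,v} \<subseteq> vec.span T" unfolding T_def by (rule vec.span_mono) auto
  have "x' \<in> U" "y' \<in> U" using p' pxy' by (auto simp: pairs_def)
  then have "{x',y',w} \<subseteq> vec.span T" using u sub1 vec.span_base[of w T] unfolding T_def by auto
  then have sub3: "vec.span {x',y',w} \<subseteq> vec.span T"
    by (intro vec.span_minimal) (auto simp: vec.subspace_span)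
  have "\<Union>{U,V,W} \<subseteq> vec.span T" using u v w sub1 sub2 sub3 by auto
  then have d: "vec.dim (vec.span (\<Union>{U,V,W})) \<le> card T"
    by (simp add: vec.dim_le_card)
  have "card T \<le> 5" unfolding T_def using List.card_length[of "[x,y,u,v,w]"] by simp
  moreover have "card {U,V,W} = 3" using UVW by simp
  then have "6 \<le> vec.dim (vec.span (\<Union>{U,V,W}))"
  proof -
    have "{U,V,W} \<subseteq> C" using UVW by auto
    then have "3 + 3 \<le> vec.dim (vec.span (\<Union>{U,V,W}))"
      using code \<open>card {U,V,W} = 3\<close> unfolding covering_code_def by blast
    then show ?thesis by simp
  qed
  ultimately show False using d by simp
qed

lemma pairs_inter: "pairs U \<inter> pairs V = pairs (U \<inter> V)"
  by (auto simp: pairs_def)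

lemma card_pairs_inter_le:
  fixes U V :: "('a::{field,finite}^'n) set"
  assumes U: "vec.subspace U" "vec.dim U = 3" and V: "vec.subspace V" "vec.dim V = 3"
    and UV: "U \<noteq> V"
  shows "card (pairs U \<inter> pairs V) \<le> (CARD('a)^2 - 1) * (CARD('a)^2 - CARD('a))"
proof -
  have sI: "vec.subspace (U \<inter> V)" using U V by (simp add: vec.subspace_inter)
  have d: "vec.dim (U \<inter> V) \<le> 2"
  proof (rule ccontr)
    assume "\<not> ?thesis"
    then have ge: "3 \<le> vec.dim (U \<inter> V)" by simp
    have "vec.span (U \<inter> V) = vec.span U" using ge U by (intro vec.dim_eq_span) auto
    then have "U \<inter> V = U" using sI U by (simp add: vec.span_eq_iff[THEN iffD2])
    moreover have "vec.span (U \<inter> V) = vec.span V" using ge V by (intro vec.dim_eq_span) auto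
    then have "U \<inter> V = V" using sI V by (simp add: vec.span_eq_iff[THEN iffD2])
    ultimately show False using UV by simp
  qed
  have q1: "1 \<le> CARD('a)" by (simp add: Suc_leI)
  have pw: "CARD('a) ^ vec.dim (U \<inter> V) \<le> CARD('a)^2"
    using d q1 by (intro power_increasing) auto
  have "card (pairs U \<inter> pairs V) = (card (U \<inter> V) - 1) * (card (U \<inter> V) - CARD('a))"
    unfolding pairs_inter by (rule card_pairs[OF sI])
  also have "\<dots> \<le> (CARD('a)^2 - 1) * (CARD('a)^2 - CARD('a))"
    unfolding card_subspace[OF sI] using pw by (intro mult_le_mono diff_le_mono)
  finally show ?thesis .
qed

lemma swap_count:
  assumes "finite C" "finite X" "\<And>U. U \<in> C \<Longrightarrow> A U \<subseteq> X"
  shows "(\<Sum>U\<in>C. card (A U)) = (\<Sum>p\<in>X. card {U\<in>C. p \<in> A U})"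
proof -
  have "(\<Sum>U\<in>C. card (A U)) = (\<Sum>U\<in>C. \<Sum>p\<in>X. if p \<in> A U then 1 else 0)"
  proof (rule sum.cong[OF refl])
    fix U assume "U \<in> C"
    then have "A U = {p\<in>X. p \<in> A U}" using assms(3) by auto
    then have "card (A U) = (\<Sum>p\<in>{p\<in>X. p \<in> A U}. 1)" by simp
    also have "\<dots> = (\<Sum>p\<in>X. if p \<in> A U then 1 else 0)"
      using assms(2) by (rule sum.inter_filter)
    finally show "card (A U) = (\<Sum>p\<in>X. if p \<in> A U then 1 else 0)" .
  qed
  also have "\<dots> = (\<Sum>p\<in>X. \<Sum>U\<in>C. if p \<in> A U then 1 else 0)" by (rule sum.swap)
  also have "\<dots> = (\<Sum>p\<in>X. card {U\<in>C. p \<in> A U})"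
  proof (rule sum.cong[OF refl])
    fix p
    have "card {U\<in>C. p \<in> A U} = (\<Sum>U\<in>{U\<in>C. p \<in> A U}. 1)" by simp
    also have "\<dots> = (\<Sum>U\<in>C. if p \<in> A U then 1 else 0)"
      using assms(1) by (rule sum.inter_filter)
    finally show "(\<Sum>U\<in>C. if p \<in> A U then 1 else 0) = card {U\<in>C. p \<in> A U}" by simp
  qed
  finally show ?thesis .
qed

lemma card_three:
  assumes "finite S" "3 \<le> card S"
  obtains U V W where "U \<in> S" "V \<in> S" "W \<in> S" "U \<noteq> V" "U \<noteq> W" "V \<noteq> W"
proof -
  obtain U where U: "U \<in> S" using assms by fastforce
  have "2 \<le> card (S - {U})" using assms U by simp
  then have "S - {U} \<noteq> {}" by (metis card.empty not_numeral_le_zero)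
  then obtain V where V: "V \<in> S - {U}" by blast
  have "1 \<le> card (S - {U} - {V})" using assms U V by (simp add: card_Diff_singleton)
  then have "S - {U} - {V} \<noteq> {}" by (metis card.empty not_one_le_zero)
  then obtain W where W: "W \<in> S - {U} - {V}" by blast
  show ?thesis using that U V W by blast
qed

lemma code_count:
  fixes C :: "('a::{field,finite}^'n) set set"
  assumes code: "covering_code C 3 3 3"
  shows "real (card C) * real ((CARD('a)^3 - 1) * (CARD('a)^3 - CARD('a)))
     \<le> real ((CARD('a)^CARD('n) - 1) * (CARD('a)^CARD('n) - CARD('a)))
        + real (card C) * real ((CARD('a)^2 - 1) * (CARD('a)^2 - CARD('a))) / 2"
proof -
  define q where "q = CARD('a)"
  define a where "a = (q^3 - 1) * (q^3 - q)"
  define b where "b = (q^2 - 1) * (q^2 - q)"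
  define N where "N = (q^CARD('n) - 1) * (q^CARD('n) - q)"
  have G: "\<And>Z. Z \<in> C \<Longrightarrow> vec.subspace Z \<and> vec.dim Z = 3"
    using code unfolding covering_code_def grassmannian_def by blast
  have finC: "finite C" by simp
  define X where "X = \<Union>(pairs ` C)"
  have finX: "finite X" by simp
  have "X \<subseteq> pairs UNIV" unfolding X_def pairs_def by auto
  moreover have "card (pairs (UNIV::('a^'n) set)) = (CARD('a^'n) - 1) * (CARD('a^'n) - CARD('a))"
    using card_pairs[of "UNIV::('a^'n) set"] by simp
  ultimately have cX: "card X \<le> N"
    using card_mono[of "pairs UNIV" X]
    unfolding N_def q_def by simp
  have hA: "\<And>U. U \<in> C \<Longrightarrow> card (pairs U) = a"
    using G card_pairs card_subspace unfolding a_def q_def by metis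
  define mult where "mult p = card {U\<in>C. p \<in> pairs U}" for p
  define Ov where "Ov U = {p \<in> pairs U. \<exists>V\<in>C. V \<noteq> U \<and> p \<in> pairs V}" for U
  define mult' where "mult' p = card {U\<in>C. p \<in> Ov U}" for p
  have s1: "(\<Sum>U\<in>C. card (pairs U)) = (\<Sum>p\<in>X. mult p)"
    unfolding mult_def by (rule swap_count[OF finC finX]) (auto simp: X_def)
  have s2: "(\<Sum>U\<in>C. card (Ov U)) = (\<Sum>p\<in>X. mult' p)"
    unfolding mult'_def by (rule swap_count[OF finC finX]) (auto simp: X_def Ov_def)
  have pt: "real (mult p) \<le> 1 + real (mult' p) / 2" if pX: "p \<in> X" for p
  proof -
    have le2: "mult p \<le> 2"
    proof (rule ccontr)
      assume "\<not> ?thesis"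
      then have "3 \<le> card {U\<in>C. p \<in> pairs U}" unfolding mult_def by simp
      then obtain U V W where "U \<in> {U\<in>C. p \<in> pairs U}" "V \<in> {U\<in>C. p \<in> pairs U}"
        "W \<in> {U\<in>C. p \<in> pairs U}" "U \<noteq> V" "U \<noteq> W" "V \<noteq> W"
        by (rule card_three[rotated]) (use finC in auto)
      then show False using F1[OF code, of U V W p p] by auto
    qed
    have ge1: "1 \<le> mult p"
    proof -
      obtain U where "U \<in> C" "p \<in> pairs U" using pX unfolding X_def by auto
      then have "{U\<in>C. p \<in> pairs U} \<noteq> {}" by auto
      then show ?thesis unfolding mult_def by (simp add: Suc_leI card_gt_0_iff)
    qed
    show ?thesis
    proof (cases "mult p = 2")
      case True
      have "{U\<in>C. p \<in> Ov U} = {U\<in>C. p \<in> pairs U}"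
      proof
        show "{U\<in>C. p \<in> Ov U} \<subseteq> {U\<in>C. p \<in> pairs U}" unfolding Ov_def by auto
      next
        show "{U\<in>C. p \<in> pairs U} \<subseteq> {U\<in>C. p \<in> Ov U}"
        proof
          fix U assume U: "U \<in> {U\<in>C. p \<in> pairs U}"
          have "\<not> {U\<in>C. p \<in> pairs U} \<subseteq> {U}"
          proof
            assume "{U\<in>C. p \<in> pairs U} \<subseteq> {U}"
            then have "card {U\<in>C. p \<in> pairs U} \<le> 1" using card_mono[of "{U}"] by fastforce
            then show False using True unfolding mult_def by simp
          qed
          then show "U \<in> {U\<in>C. p \<in> Ov U}" using U unfolding Ov_def by auto
        qed
      qed
      then have "mult' p = mult p" unfolding mult'_def mult_def by simp
      then show ?thesis using True by simp
    next
      case False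
      then have "mult p = 1" using le2 ge1 by simp
      then show ?thesis by simp
    qed
  qed
  have oB: "card (Ov U) \<le> b" if U: "U \<in> C" for U
  proof (cases "Ov U = {}")
    case True then show ?thesis by simp
  next
    case False
    then obtain p V where pU: "p \<in> pairs U" and V: "V \<in> C" "V \<noteq> U" "p \<in> pairs V"
      unfolding Ov_def by blast
    have "Ov U \<subseteq> pairs U \<inter> pairs V"
    proof
      fix p' assume "p' \<in> Ov U"
      then obtain W where W: "W \<in> C" "W \<noteq> U" "p' \<in> pairs W" "p' \<in> pairs U"
        unfolding Ov_def by blast
      have "W = V"
      proof (rule ccontr)
        assume "W \<noteq> V"
        then show False using F1[OF code U V(1) W(1) _ _ _ pU V(3) W(4) W(3)] V W by auto
      qed
      then show "p' \<in> pairs U \<inter> pairs V" using W by simp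
    qed
    then have "card (Ov U) \<le> card (pairs U \<inter> pairs V)" by (simp add: card_mono)
    also have "\<dots> \<le> b" unfolding b_def q_def
      using G[OF U] G[OF V(1)] V(2) by (intro card_pairs_inter_le) auto
    finally show ?thesis .
  qed
  have "real (card C) * a = (\<Sum>U\<in>C. real (card (pairs U)))" using hA by simp
  also have "\<dots> = (\<Sum>p\<in>X. real (mult p))" using s1 by (metis of_nat_sum)
  also have "\<dots> \<le> (\<Sum>p\<in>X. 1 + real (mult' p) / 2)" using pt by (rule sum_mono)
  also have "\<dots> = real (card X) + (\<Sum>p\<in>X. real (mult' p)) / 2"
    by (simp add: sum.distrib sum_divide_distrib)
  also have "(\<Sum>p\<in>X. real (mult' p)) = (\<Sum>U\<in>C. real (card (Ov U)))"
    using s2 by (metis of_nat_sum)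
  also have "\<dots> \<le> (\<Sum>U\<in>C. real b)" using oB by (intro sum_mono) simp
  also have "\<dots> = real (card C) * b" by simp
  finally have "real (card C) * a \<le> real (card X) + real (card C) * b / 2" by simp
  moreover have "real (card X) \<le> real N" using cX by simp
  ultimately have "real (card C) * real a \<le> real N + real (card C) * real b / 2" by simp
  then show ?thesis unfolding a_def b_def N_def q_def .
qed

lemma final_ineq:
  fixes a b N c :: real
  assumes "0 < b" "b < a" "c * a \<le> N + c * b / 2"
  shows "c \<le> (1 + 1 / (2 * (a / b) - 1)) * (N / b) / (a / b)"
proof -
  have pos: "0 < 2 * a - b" using assms by simp
  have "(1 + 1 / (2 * (a / b) - 1)) * (N / b) / (a / b) = 2 * N / (2 * a - b)"
    using assms pos by (simp add: field_simps)
  moreover have "c * (2 * a - b) \<le> 2 * N" using assms(3) by (simp add: algebra_simps)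
  ultimately show ?thesis using pos by (simp add: pos_le_divide_eq)
qed

lemma real_pairs_count:
  assumes "1 \<le> k"
  shows "real ((CARD('a::{field,finite}) ^ k - 1) * (CARD('a) ^ k - CARD('a)))
    = (real CARD('a) ^ k - 1) * (real CARD('a) ^ k - real CARD('a))"
proof -
  have c0: "0 < CARD('a)" by simp
  have "CARD('a) \<le> CARD('a) ^ k" using assms c0 by (simp add: self_le_power)
  moreover have "1 \<le> CARD('a) ^ k" using c0 by (simp add: Suc_leI)
  ultimately show ?thesis by (simp add: of_nat_diff)
qed

lemma card_field_ge2: "2 \<le> CARD('a::{field,finite})"
proof -
  have "card {0::'a, 1} = 2" by simp
  moreover have "card {0::'a, 1} \<le> CARD('a)" by (rule card_mono) auto
  ultimately show ?thesis by simp
qed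

theorem mainTheorem2:
  assumes "CARD('n::finite) \<ge> 3"
  shows "real (Bq TYPE('a::{field,finite} ^ 'n) 3 3 3)
    \<le> (1 + 1 / (2 * gauss_binom (real CARD('a)) 3 2 - 1))
       * gauss_binom (real CARD('a)) (CARD('n)) 2 / gauss_binom (real CARD('a)) 3 2"
proof -
  define K where "K = {card C | C :: ('a ^ 'n) set set. covering_code C 3 3 3}"
  have "K = card ` {C :: ('a ^ 'n) set set. covering_code C 3 3 3}" unfolding K_def by auto
  then have finK: "finite K" by simp
  have "covering_code ({} :: ('a ^ 'n) set set) 3 3 3" unfolding covering_code_def by auto
  then have "0 \<in> K" unfolding K_def by force
  then have neK: "K \<noteq> {}" by auto
  have "Bq TYPE('a ^ 'n) 3 3 3 = Sup K" unfolding Bq_def K_def by simp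
  also have "\<dots> = Max K" using finK neK by (rule cSup_eq_Max)
  finally have "Bq TYPE('a ^ 'n) 3 3 3 \<in> K" using Max_in[OF finK neK] by simp
  then obtain C :: "('a ^ 'n) set set" where code: "covering_code C 3 3 3"
    and BC: "Bq TYPE('a ^ 'n) 3 3 3 = card C" unfolding K_def by auto
  define r where "r = real CARD('a)"
  have r2: "2 \<le> r" unfolding r_def using card_field_ge2[where 'a='a] by linarith
  define a where "a = (r^3 - 1) * (r^3 - r)"
  define b where "b = (r^2 - 1) * (r^2 - r)"
  define N where "N = (r^CARD('n) - 1) * (r^CARD('n) - r)"
  have cnt: "real (card C) * a \<le> N + real (card C) * b / 2"
    using code_count[OF code] unfolding a_def b_def N_def r_def
    by (simp only: real_pairs_count[of 3] real_pairs_count[of 2] real_pairs_count[of "CARD('n)"]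
        assms order_trans[OF _ assms] one_le_numeral)
  have rr: "2 * r \<le> r * r" using mult_right_mono[OF r2, of r] r2 by simp
  have rrr: "2 * (r * r) \<le> r * (r * r)" using mult_right_mono[OF r2, of "r*r"] r2 by simp
  have f1: "0 < r^2 - 1" "0 < r^2 - r" unfolding power2_eq_square using rr r2 by linarith+
  have f2: "r^2 - 1 < r^3 - 1" "r^2 - r < r^3 - r" unfolding power2_eq_square power3_eq_cube
    using rrr rr r2 by linarith+
  have b0: "0 < b" unfolding b_def using f1 by simp
  have ab: "b < a" unfolding a_def b_def
    using f1 f2 by (intro mult_strict_mono) auto
  have g3: "gauss_binom r 3 2 = a / b"
    unfolding gauss_binom_def a_def b_def by (simp add: numeral_2_eq_2)
  have gn: "gauss_binom r (CARD('n)) 2 = N / b"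
    unfolding gauss_binom_def N_def b_def by (simp add: numeral_2_eq_2)
  show ?thesis
    unfolding BC r_def[symmetric] g3 gn
    using final_ineq[OF b0 ab cnt] .
qed

end
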